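(* Consider the causal adversarial multi-path network model described in the context, with $C$ links of unit capacity, overwrite jamming, no feedback and no secrecy requirement. For any adversary vector $\vec z=(z_{rw},z_{ro},z_{wo})$ with $z_{rw}+z_{ro}+z_{wo}\le C$, the capacity is $$R^{ow}_j(C,\vec z)=\begin{cases} C-(z_{rw}+z_{wo}) & \text{if } 2z_{wo}+2z_{rw}<C,\\ 0 & \text{otherwise.}\end{cases}$$
   Context: Model. A sender (Alice) communicates with a receiver (Bob) over $C$ parallel directed noiseless links $L_1,\dots,L_C$; in the equal-capacity case each link has unit capacity: over a block of $n$ time slots each link carries a length-$n$ word (one unit of information per time slot; the links are taken in the large-alphabet regime, i.e. symbols may be grouped into elements of finite fields $\mathbb F_{2^b}$ with $b$ growing with $n$). A code of block length $n$ and rate $R$ has message $M$ uniform on $\{0,1\}^{nR}$; the encoder is stochastic, using private randomness of Alice unknown to the adversary, and maps the message and randomness to codewords $\vec X_1,\dots,\vec X_C$ (row $i$ sent on $L_i$). The decoder maps the received words $\vec Y_1,\dots,\vec Y_C$ to an estimate $\hat M$. Adversary. An adversary (Calvin), who knows the encoder and decoder, selects pairwise disjoint link sets $Z_{rw},Z_{ro},Z_{wo}$ (unknown to Alice and Bob) with $|Z_{rw}|\le z_{rw}$, $|Z_{ro}|\le z_{ro}$, $|Z_{wo}|\le z_{wo}$; he can read (eavesdrop) the links in $Z_r=Z_{rw}\cup Z_{ro}$ and write (jam) the links in $Z_w=Z_{rw}\cup Z_{wo}$. Write $z_r=z_{rw}+z_{ro}$, $z_w=z_{rw}+z_{wo}$,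 $\vec z=(z_{rw},z_{ro},z_{wo})$. The adversary is causal: at each time $t$ his jamming of the $t$-th symbols of links in $Z_w$ may depend only on the first $t$ symbols observed on the links in $Z_r$ (and his own randomness). Under additive jamming, the received word on link $i$ is $\vec Y_i=\vec X_i+\vec E_i$ where $\vec E_i$ is chosen by Calvin and $\vec E_i=0$ for $i\notin Z_w$. Under overwrite jamming, $\vec Y_i=\vec E_i$ for $i\in Z_w$ (Calvin replaces the symbols by his own) and $\vec Y_i=\vec X_i$ otherwise. Reliability and capacity. Rate $R$ is achievable if for every $\varepsilon>0$ and all sufficiently large $n$ there is a code of block length $n$ and rate $R$ with $\Pr[\hat M\neq M]<\varepsilon$ against every admissible causal adversary strategy; the capacity is the supremum of achievable rates. (Without feedback, the encoder's output depends only on the message and Alice's randomness.) *)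

theory Defs
  imports "HOL-Probability.Probability"
begin

text \<open>
Links are indexed 0..C-1, time slots (symbols) 0..N-1.  Each link symbol is an
element of an alphabet of size q = 2^b (a symbol of F_{2^b}, i.e. b bits),
represented by the naturals below q.  A codeword is a list of C rows, each a
list of N symbols.
\<close>

type_synonym codeword = "nat list list"

text \<open>A deterministic jamming strategy: J i t X is the symbol Calvin writes on
link i at time t; it is given all transmitted rows X but must be causal (below).\<close>
type_synonym jammer = "nat \<Rightarrow> nat \<Rightarrow> (nat \<Rightarrow> nat list) \<Rightarrow> nat"

definition well_formed_code ::
  "nat \<Rightarrow> nat \<Rightarrow> nat \<Rightarrow> nat \<Rightarrow> (nat \<Rightarrow> codeword pmf) \<Rightarrow> bool" where
  "well_formed_code C q N K enc \<longleftrightarrow> K \<ge> 1 \<and>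
     (\<forall>m<K. \<forall>x\<in>set_pmf (enc m). length x = C \<and>
        (\<forall>row\<in>set x. length row = N \<and> (\<forall>s\<in>set row. s < q)))"

definition causal_jammer :: "nat \<Rightarrow> nat set \<Rightarrow> jammer \<Rightarrow> bool" where
  "causal_jammer q Zr J \<longleftrightarrow>
     (\<forall>i t X X'. (\<forall>j\<in>Zr. take (Suc t) (X j) = take (Suc t) (X' j))
          \<longrightarrow> J i t X = J i t X') \<and>
     (\<forall>i t X. J i t X < q)"

definition received_ow :: "nat \<Rightarrow> nat \<Rightarrow> nat set \<Rightarrow> jammer \<Rightarrow> codeword \<Rightarrow> codeword" where
  "received_ow C N Zw J X =
     map (\<lambda>i. if i \<in> Zw then map (\<lambda>t. J i t (\<lambda>j. X ! j)) [0..<N] else X ! i) [0..<C]"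

text \<open>Probability of decoding error: uniform message, Alice's private randomness
(inside enc), Calvin's independent randomness (a distribution adv over jammers).\<close>
definition error_prob ::
  "nat \<Rightarrow> nat \<Rightarrow> nat \<Rightarrow> (nat \<Rightarrow> codeword pmf) \<Rightarrow> (codeword \<Rightarrow> nat)
     \<Rightarrow> nat set \<Rightarrow> jammer pmf \<Rightarrow> real" where
  "error_prob C N K enc dec Zw adv =
     measure_pmf.prob
       (pmf_of_set {..<K} \<bind> (\<lambda>m. enc m \<bind> (\<lambda>X. adv \<bind>
          (\<lambda>J. return_pmf (dec (received_ow C N Zw J X) \<noteq> m))))) {True}"

definition admissible_adv ::
  "nat \<Rightarrow> nat \<Rightarrow> nat \<Rightarrow> nat \<Rightarrow> nat \<Rightarrow> nat set \<Rightarrow> nat set \<Rightarrow> nat set \<Rightarrow> jammer pmf \<Rightarrow> bool" where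
  "admissible_adv C q zrw zro zwo Zrw Zro Zwo adv \<longleftrightarrow>
     Zrw \<subseteq> {..<C} \<and> Zro \<subseteq> {..<C} \<and> Zwo \<subseteq> {..<C} \<and>
     Zrw \<inter> Zro = {} \<and> Zrw \<inter> Zwo = {} \<and> Zro \<inter> Zwo = {} \<and>
     card Zrw \<le> zrw \<and> card Zro \<le> zro \<and> card Zwo \<le> zwo \<and>
     (\<forall>J\<in>set_pmf adv. causal_jammer q (Zrw \<union> Zro) J)"

text \<open>Rate R achievable: for every eps > 0 and all sufficiently large block length N
there is a code (alphabet F_{2^b}, b \<ge> 1 allowed to depend on N) carrying at least
R*N*b bits (log2 K \<ge> R * N * b) with error < eps against every admissible causal
overwrite adversary.\<close>
definition ow_achievable :: "nat \<Rightarrow> nat \<Rightarrow> nat \<Rightarrow> nat \<Rightarrow> real \<Rightarrow> bool" where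
  "ow_achievable C zrw zro zwo R \<longleftrightarrow>
     (\<forall>eps>0. \<exists>N0. \<forall>N\<ge>N0. \<exists>b K enc dec. b \<ge> 1 \<and>
        well_formed_code C (2^b) N K enc \<and>
        log 2 (real K) \<ge> R * real N * real b \<and>
        (\<forall>Zrw Zro Zwo adv. admissible_adv C (2^b) zrw zro zwo Zrw Zro Zwo adv \<longrightarrow>
            error_prob C N K enc dec (Zrw \<union> Zwo) adv < eps))"

definition ow_capacity :: "nat \<Rightarrow> nat \<Rightarrow> nat \<Rightarrow> nat \<Rightarrow> real" where
  "ow_capacity C zrw zro zwo = Sup {R. R \<ge> 0 \<and> ow_achievable C zrw zro zwo R}"

end

theory Submission
  imports Defs "HOL-Computational_Algebra.Polynomial"
begin

lemma root_count_poly: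
  fixes f :: "int poly" and p :: nat
  assumes "prime p" "\<exists>s. \<not> int p dvd coeff f s"
  shows "card {x\<in>{..<p}. int p dvd poly f (int x)} \<le> degree f"
  using assms(2)
proof (induction "degree f" arbitrary: f rule: less_induct)
  case less
  let ?R = "{x\<in>{..<p}. int p dvd poly f (int x)}"
  show ?case
  proof (cases "?R = {}")
    case True then show ?thesis by (metis card.empty le0)
  next
    case False
    then obtain a where a: "a < p" "int p dvd poly f (int a)" by auto
    define fa where "fa = poly f (int a)"
    have "poly (f - [:fa:]) (int a) = 0" by (simp add: fa_def)
    then obtain g where g: "f - [:fa:] = [:- int a, 1:] * g"
      by (metis poly_eq_0_iff_dvd dvdE)
    have fdec: "f = [:- int a, 1:] * g + [:fa:]" using g by (simp add: algebra_simps)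
    have gnd: "\<exists>s. \<not> int p dvd coeff g s"
    proof (rule ccontr)
      assume "\<not> ?thesis"
      hence gd: "\<forall>s. int p dvd coeff g s" by simp
      define h where "h = map_poly (\<lambda>c. c div int p) g"
      have "g = smult (int p) h"
        by (rule poly_eqI) (use gd in \<open>auto simp: h_def coeff_map_poly\<close>)
      hence "f = smult (int p) ([:- int a, 1:] * h) + [:fa:]" using fdec by simp
      hence cf: "\<And>s. coeff f s = int p * coeff ([:- int a, 1:] * h) s + (if s = 0 then fa else 0)"
        by (auto simp: coeff_pCons split: nat.splits)
      have "int p dvd fa" using a(2) by (simp add: fa_def)
      hence "\<forall>s. int p dvd coeff f s" by (auto simp: cf)
      thus False using less.prems by blast
    qed
    have g0: "g \<noteq> 0" using gnd by auto
    have degf: "degree f = Suc (degree g)"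
    proof -
      have "degree ([:- int a, 1:] * g) = Suc (degree g)"
        using g0 by (subst degree_mult_eq) auto
      moreover have "degree ([:- int a, 1:] * g) \<ge> 1" using calculation by simp
      ultimately show ?thesis using fdec
        by (subst fdec, subst degree_add_eq_left) auto
    qed
    have IH: "card {x\<in>{..<p}. int p dvd poly g (int x)} \<le> degree g"
      using less.hyps[of g] degf gnd by simp
    have sub: "?R \<subseteq> insert a {x\<in>{..<p}. int p dvd poly g (int x)}"
    proof
      fix x assume x: "x \<in> ?R"
      have "poly f (int x) = (int x - int a) * poly g (int x) + fa"
        by (subst fdec) (simp add: algebra_simps)
      hence "int p dvd (int x - int a) * poly g (int x)" using x a(2)
        unfolding fa_def by (simp add: dvd_add_left_iff)
      hence "int p dvd (int x - int a) \<or> int p dvd poly g (int x)"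
        using assms(1) by (simp add: prime_dvd_mult_iff)
      moreover have "int p dvd (int x - int a) \<Longrightarrow> x = a"
      proof -
        assume d: "int p dvd (int x - int a)"
        have "x < p" using x by auto
        hence "\<bar>int x - int a\<bar> < int p" using a(1) by auto
        show "x = a"
        proof (rule ccontr)
          assume "x \<noteq> a"
          hence "int x - int a \<noteq> 0" by simp
          moreover have "int p dvd \<bar>int x - int a\<bar>" using d by simp
          ultimately have "int p \<le> \<bar>int x - int a\<bar>"
            by (intro zdvd_imp_le) auto
          thus False using \<open>\<bar>int x - int a\<bar> < int p\<close> by simp
        qed
      qed
      ultimately show "x \<in> insert a {x\<in>{..<p}. int p dvd poly g (int x)}" using x by auto
    qed
    have "card ?R \<le> card (insert a {x\<in>{..<p}. int p dvd poly g (int x)})"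
      by (rule card_mono) (use sub in auto)
    also have "\<dots> \<le> Suc (degree g)" using IH by (simp add: card_insert_if)
    finally show ?thesis using degf by simp
  qed
qed

lemma root_count_sum:
  fixes c :: "nat \<Rightarrow> int" and p n s0 :: nat
  assumes "prime p" "s0 < n" "\<not> int p dvd c s0"
  shows "card {x\<in>{..<p}. int p dvd (\<Sum>s<n. c s * int x ^ s)} < n"
proof -
  define f where "f = (\<Sum>s<n. monom (c s) s)"
  have pf: "poly f y = (\<Sum>s<n. c s * y ^ s)" for y
    by (simp add: f_def poly_sum poly_monom)
  have cf: "coeff f s0 = c s0"
    using assms(2) by (simp add: f_def coeff_sum)
  have df: "degree f \<le> n - 1"
    unfolding f_def by (rule degree_sum_le) (use assms(2) in \<open>auto intro: order.trans[OF degree_monom_le]\<close>)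
  have "card {x\<in>{..<p}. int p dvd poly f (int x)} \<le> degree f"
    by (rule root_count_poly[OF assms(1)]) (rule exI[of _ s0], simp add: cf assms(3))
  thus ?thesis using df assms(2) by (simp add: pf)
qed

lemma dvd_small_int: "int p dvd (c::int) \<Longrightarrow> c \<noteq> 0 \<Longrightarrow> \<bar>c\<bar> < int p \<Longrightarrow> False"
proof -
  assume a: "int p dvd c" "c \<noteq> 0" "\<bar>c\<bar> < int p"
  have "int p dvd \<bar>c\<bar>" using a(1) by simp
  hence "int p \<le> \<bar>c\<bar>" using a(2) by (intro zdvd_imp_le) auto
  thus False using a(3) by simp
qed

lemma nat_mod_eq_int_dvd: "((a::nat) mod p = b mod p) \<longleftrightarrow> int p dvd (int a - int b)"
  by (metis mod_eq_dvd_iff of_nat_mod of_nat_eq_iff)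

definition hsh :: "nat \<Rightarrow> nat list \<Rightarrow> nat \<Rightarrow> nat" where
  "hsh p d k = (\<Sum>s<length d. d!s * k^(Suc s)) mod p"

lemma hsh_collision:
  assumes "prime p" "length d = L" "length d' = L" "\<forall>s\<in>set d. s < p" "\<forall>s\<in>set d'. s < p" "d \<noteq> d'"
  shows "card {x\<in>{..<p}. hsh p d x = hsh p d' x} \<le> L"
proof -
  obtain s1 where s1: "s1 < L" "d!s1 \<noteq> d'!s1"
    using assms(2,3,6) nth_equalityI by metis
  define c where "c s = (if s = 0 then 0 else int (d!(s-1)) - int (d'!(s-1)))" for s
  have eq: "(\<Sum>s<Suc L. c s * y ^ s) = (\<Sum>s<L. int (d!s) * y^(Suc s)) - (\<Sum>s<L. int (d'!s) * y^(Suc s))" for y :: int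
    by (subst sum.lessThan_Suc_shift) (simp add: c_def sum_subtractf algebra_simps)
  have nd: "\<not> int p dvd c (Suc s1)"
  proof
    assume "int p dvd c (Suc s1)"
    moreover have "c (Suc s1) \<noteq> 0" using s1 by (simp add: c_def)
    moreover have "\<bar>c (Suc s1)\<bar> < int p"
    proof -
      have "d!s1 < p" "d'!s1 < p" using s1 assms(2-5) nth_mem by metis+
      thus ?thesis by (simp add: c_def abs_less_iff)
    qed
    ultimately show False by (rule dvd_small_int)
  qed
  have "{x\<in>{..<p}. hsh p d x = hsh p d' x} = {x\<in>{..<p}. int p dvd (\<Sum>s<Suc L. c s * int x ^ s)}"
    unfolding eq hsh_def nat_mod_eq_int_dvd using assms(2,3) by simp
  also have "card \<dots> < Suc L"
    by (rule root_count_sum[of p "Suc s1" "Suc L" c, OF assms(1) _ nd]) (use s1 in simp)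
  finally show ?thesis by simp
qed

definition digit :: "nat \<Rightarrow> nat \<Rightarrow> nat \<Rightarrow> nat \<Rightarrow> nat \<Rightarrow> nat" where
  "digit p k m t r = m div p ^ (t * k + r) mod p"

definition datasym :: "nat \<Rightarrow> nat \<Rightarrow> nat \<Rightarrow> nat \<Rightarrow> nat \<Rightarrow> nat" where
  "datasym p k m i t = (\<Sum>r<k. digit p k m t r * i ^ r) mod p"

lemma mds_digits:
  assumes "prime p" "A \<subseteq> {..<p}" "card A \<ge> k" "\<forall>i\<in>A. datasym p k m i t = datasym p k m' i t" "r < k"
  shows "digit p k m t r = digit p k m' t r"
proof (rule ccontr)
  assume ne: "digit p k m t r \<noteq> digit p k m' t r"
  define c where "c s = int (digit p k m t s) - int (digit p k m' t s)" for s
  have pp: "p > 0" using assms(1) prime_gt_0_nat by blast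
  have nd: "\<not> int p dvd c r"
  proof
    assume "int p dvd c r"
    moreover have "c r \<noteq> 0" using ne by (simp add: c_def)
    moreover have "\<bar>c r\<bar> < int p"
    proof -
      have "digit p k m t r < p" "digit p k m' t r < p" using pp by (auto simp: digit_def)
      thus ?thesis by (simp add: c_def abs_less_iff)
    qed
    ultimately show False by (rule dvd_small_int)
  qed
  have "A \<subseteq> {x\<in>{..<p}. int p dvd (\<Sum>s<k. c s * int x ^ s)}"
  proof
    fix i assume i: "i \<in> A"
    have "(\<Sum>s<k. c s * int i ^ s) = int (\<Sum>r<k. digit p k m t r * i ^ r) - int (\<Sum>r<k. digit p k m' t r * i ^ r)"
      by (simp add: c_def sum_subtractf algebra_simps)
    thus "i \<in> {x\<in>{..<p}. int p dvd (\<Sum>s<k. c s * int x ^ s)}"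
      using assms(2,4) i by (auto simp: datasym_def nat_mod_eq_int_dvd)
  qed
  hence "card A \<le> card {x\<in>{..<p}. int p dvd (\<Sum>s<k. c s * int x ^ s)}"
    by (intro card_mono) auto
  also have "\<dots> < k" by (rule root_count_sum[of p r k c, OF assms(1) assms(5) nd])
  finally show False using assms(3) by simp
qed

lemma digits_inj:
  fixes p :: nat
  assumes "p > 1" "m < p ^ n" "m' < p ^ n" "\<forall>i<n. m div p ^ i mod p = m' div p ^ i mod p"
  shows "m = m'"
  using assms(2-4)
proof (induction n arbitrary: m m')
  case 0 thus ?case by simp
next
  case (Suc n)
  have "m div p < p ^ n" "m' div p < p ^ n"
    using Suc.prems(1,2) assms(1) by (auto simp: less_mult_imp_div_less mult.commute)
  moreover have "\<forall>i<n. m div p div p ^ i mod p = m' div p div p ^ i mod p"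
    using Suc.prems(3) by (auto simp: div_mult2_eq[symmetric] mult.commute)
  ultimately have "m div p = m' div p" using Suc.IH by blast
  moreover have "m mod p = m' mod p" using Suc.prems(3)[rule_format, of 0] by simp
  ultimately show ?case by (metis div_mult_mod_eq)
qed


definition datarow :: "nat \<Rightarrow> nat \<Rightarrow> nat \<Rightarrow> nat \<Rightarrow> nat \<Rightarrow> nat list" where
  "datarow p k L m i = map (datasym p k m i) [0..<L]"

definition cw :: "nat \<Rightarrow> nat \<Rightarrow> nat \<Rightarrow> nat \<Rightarrow> nat \<Rightarrow> (nat \<Rightarrow> nat) \<Rightarrow> codeword" where
  "cw p k L C m ks = map (\<lambda>i. datarow p k L m i @ ks i # map (\<lambda>j. hsh p (datarow p k L m j) (ks i)) [0..<C]) [0..<C]"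

definition rdata :: "nat \<Rightarrow> nat \<Rightarrow> codeword \<Rightarrow> nat \<Rightarrow> nat list" where
  "rdata p L Y j = map (\<lambda>s. s mod p) (take L (Y!j))"

definition votes :: "nat \<Rightarrow> nat \<Rightarrow> nat \<Rightarrow> codeword \<Rightarrow> nat \<Rightarrow> nat" where
  "votes p L C Y j = card {l\<in>{..<C}. hsh p (rdata p L Y j) (Y!l!L) = Y!l!(Suc L + j)}"

definition acc :: "nat \<Rightarrow> nat \<Rightarrow> nat \<Rightarrow> nat \<Rightarrow> codeword \<Rightarrow> nat set" where
  "acc p k L C Y = {j\<in>{..<C}. votes p L C Y j \<ge> k}"

definition dec :: "nat \<Rightarrow> nat \<Rightarrow> nat \<Rightarrow> nat \<Rightarrow> codeword \<Rightarrow> nat" where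
  "dec p k L C Y = (SOME m. m < p ^ (k * L) \<and> (\<forall>j\<in>acc p k L C Y. datarow p k L m j = rdata p L Y j))"

lemma datasym_lt: "p > 0 \<Longrightarrow> datasym p k m i t < p"
  by (simp add: datasym_def)

lemma length_datarow[simp]: "length (datarow p k L m i) = L"
  by (simp add: datarow_def)

lemma cw_nth:
  assumes "l < C"
  shows "cw p k L C m ks ! l = datarow p k L m l @ ks l # map (\<lambda>j. hsh p (datarow p k L m j) (ks l)) [0..<C]"
  using assms by (simp add: cw_def)

lemma length_cw[simp]: "length (cw p k L C m ks) = C"
  by (simp add: cw_def)

lemma datarow_inj:
  assumes "prime p" "A \<subseteq> {..<p}" "card A \<ge> k" "k > 0"
    "m < p ^ (k * L)" "m' < p ^ (k * L)" "\<forall>j\<in>A. datarow p k L m' j = datarow p k L m j"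
  shows "m' = m"
proof -
  have dg: "digit p k m t r = digit p k m' t r" if "t < L" "r < k" for t r
  proof (rule mds_digits[OF assms(1,2,3) _ that(2)])
    show "\<forall>i\<in>A. datasym p k m i t = datasym p k m' i t"
      using assms(7) that(1) by (auto simp: datarow_def dest!: map_eq_imp_length_eq intro: nth_map_upt)
  qed
  show ?thesis
  proof (rule digits_inj[where p=p and n="k * L"])
    show "p > 1" using assms(1) prime_gt_1_nat by blast
    show "\<forall>i<k * L. m' div p ^ i mod p = m div p ^ i mod p"
    proof (intro allI impI)
      fix i assume i: "i < k * L"
      have "i div k < L" using i assms(4) by (simp add: div_less_iff_less_mult mult.commute)
      moreover have "i mod k < k" using assms(4) by simp
      moreover have "i div k * k + i mod k = i" by simp
      ultimately show "m' div p ^ i mod p = m div p ^ i mod p"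
        using dg[of "i div k" "i mod k"] by (simp add: digit_def)
    qed
  qed (use assms in auto)
qed

lemma decode_ok:
  assumes p: "prime p" and Cp: "C \<le> p" and kz: "k + zw = C" "zw < k"
    and Zw: "Zw \<subseteq> {..<C}" "card Zw \<le> zw" and m: "m < p ^ (k * L)"
    and hon: "\<forall>l<C. l \<notin> Zw \<longrightarrow> Y!l = cw p k L C m ks ! l"
    and good: "\<forall>l<C. l \<notin> Zw \<longrightarrow> (\<forall>j<C. rdata p L Y j \<noteq> datarow p k L m j \<longrightarrow>
                 hsh p (rdata p L Y j) (ks l) \<noteq> hsh p (datarow p k L m j) (ks l))"
  shows "dec p k L C Y = m"
proof -
  define H where "H = {..<C} - Zw"
  have pp: "p > 0" using p prime_gt_0_nat by blast
  have finZ: "finite Zw" using Zw(1) finite_subset by blast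
  have cH: "card H \<ge> k"
  proof -
    have "card H = C - card Zw" unfolding H_def using Zw(1) finZ by (simp add: card_Diff_subset)
    thus ?thesis using kz Zw(2) by simp
  qed
  have row: "Y!l = datarow p k L m l @ ks l # map (\<lambda>j. hsh p (datarow p k L m j) (ks l)) [0..<C]" if "l \<in> H" for l
    using that hon cw_nth[of l C p k L m ks] by (auto simp: H_def)
  have hkey: "Y!l!L = ks l" if "l \<in> H" for l
    using row[OF that] by (simp add: nth_append)
  have hh: "Y!l!(Suc L + j) = hsh p (datarow p k L m j) (ks l)" if "l \<in> H" "j < C" for l j
  proof -
    have "Y!l!(Suc L + j) = (datarow p k L m l @ ks l # map (\<lambda>j. hsh p (datarow p k L m j) (ks l)) [0..<C]) ! (L + Suc j)"
      using row[OF that(1)] by simp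
    also have "\<dots> = hsh p (datarow p k L m j) (ks l)"
      using that(2) by (simp add: nth_append)
    finally show ?thesis .
  qed
  have dmod: "map (\<lambda>s. s mod p) (datarow p k L m j) = datarow p k L m j" for j
    by (rule map_idI) (auto simp: datarow_def datasym_lt[OF pp])
  have rd: "rdata p L Y j = datarow p k L m j" if "j \<in> H" for j
    using row[OF that] dmod[of j] by (simp add: rdata_def)
  have acc_eq: "acc p k L C Y = {j\<in>{..<C}. rdata p L Y j = datarow p k L m j}"
  proof (intro set_eqI iffI)
    fix j assume j: "j \<in> acc p k L C Y"
    hence jC: "j < C" and v: "votes p L C Y j \<ge> k" by (auto simp: acc_def)
    show "j \<in> {j\<in>{..<C}. rdata p L Y j = datarow p k L m j}"
    proof (rule ccontr)
      assume "j \<notin> {j\<in>{..<C}. rdata p L Y j = datarow p k L m j}"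
      hence ne: "rdata p L Y j \<noteq> datarow p k L m j" using jC by auto
      have "{l\<in>{..<C}. hsh p (rdata p L Y j) (Y!l!L) = Y!l!(Suc L + j)} \<subseteq> Zw"
      proof
        fix l assume l: "l \<in> {l\<in>{..<C}. hsh p (rdata p L Y j) (Y!l!L) = Y!l!(Suc L + j)}"
        show "l \<in> Zw"
        proof (rule ccontr)
          assume "l \<notin> Zw"
          hence lH: "l \<in> H" using l by (auto simp: H_def)
          hence "hsh p (rdata p L Y j) (ks l) = hsh p (datarow p k L m j) (ks l)"
            using l hkey[OF lH] hh[OF lH jC] by simp
          thus False using good lH ne jC by (auto simp: H_def)
        qed
      qed
      hence "votes p L C Y j \<le> card Zw" unfolding votes_def using finZ by (rule card_mono[rotated])
      thus False using v Zw(2) kz by simp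
    qed
  next
    fix j assume j: "j \<in> {j\<in>{..<C}. rdata p L Y j = datarow p k L m j}"
    have "H \<subseteq> {l\<in>{..<C}. hsh p (rdata p L Y j) (Y!l!L) = Y!l!(Suc L + j)}"
      using j hkey hh by (auto simp: H_def)
    hence "card H \<le> votes p L C Y j" unfolding votes_def by (intro card_mono) auto
    thus "j \<in> acc p k L C Y" using cH j by (auto simp: acc_def)
  qed
  have Hacc: "H \<subseteq> acc p k L C Y" using rd by (auto simp: acc_eq H_def)
  have cacc: "card (acc p k L C Y) \<ge> k"
    using cH card_mono[OF _ Hacc] by (auto simp: acc_def)
  have accp: "acc p k L C Y \<subseteq> {..<p}" using Cp by (auto simp: acc_def)
  show ?thesis unfolding dec_def
  proof (rule someI2[where a=m])
    show "m < p ^ (k * L) \<and> (\<forall>j\<in>acc p k L C Y. datarow p k L m j = rdata p L Y j)"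
      using m by (auto simp: acc_eq)
  next
    fix m' assume m': "m' < p ^ (k * L) \<and> (\<forall>j\<in>acc p k L C Y. datarow p k L m' j = rdata p L Y j)"
    show "m' = m"
      by (rule datarow_inj[OF p accp cacc _ m]) (use m' kz in \<open>auto simp: acc_eq\<close>)
  qed
qed


lemma bind_le:
  assumes "\<And>x. x \<in> set_pmf M \<Longrightarrow> pmf (f x) a \<le> d" "d \<ge> 0"
  shows "pmf (bind_pmf M f) a \<le> d"
proof -
  have "pmf (bind_pmf M f) a = (\<integral>x. pmf (f x) a \<partial>measure_pmf M)" by (rule pmf_bind)
  also have "\<dots> \<le> (\<integral>x. d \<partial>measure_pmf M)"
    by (rule integral_mono_AE') (use assms in \<open>auto simp: AE_measure_pmf_iff\<close>)
  also have "\<dots> = d" by simp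
  finally show ?thesis .
qed

definition keydist :: "nat \<Rightarrow> nat \<Rightarrow> (nat \<Rightarrow> nat) pmf" where
  "keydist p C = Pi_pmf {..<C} 0 (\<lambda>_. pmf_of_set {..<p})"

definition encd :: "nat \<Rightarrow> nat \<Rightarrow> nat \<Rightarrow> nat \<Rightarrow> nat \<Rightarrow> codeword pmf" where
  "encd p k L C m = map_pmf (cw p k L C m) (keydist p C)"

lemma key_prob:
  assumes "l < C" "p > 0"
  shows "measure_pmf.prob (keydist p C) {ks. ks l \<in> S} = real (card ({..<p} \<inter> S)) / real p"
proof -
  have "measure_pmf.prob (keydist p C) {ks. ks l \<in> S} = measure_pmf.prob (map_pmf (\<lambda>f. f l) (keydist p C)) S"
    by (simp add: vimage_def)
  also have "map_pmf (\<lambda>f. f l) (keydist p C) = pmf_of_set {..<p}"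
    unfolding keydist_def using assms by (subst Pi_pmf_component) auto
  also have "measure_pmf.prob (pmf_of_set {..<p}) S = real (card ({..<p} \<inter> S)) / real p"
    using assms by (subst measure_pmf_of_set) auto
  finally show ?thesis .
qed

lemma received_nth:
  assumes "j < C"
  shows "received_ow C N Zw J X ! j = (if j \<in> Zw then map (\<lambda>t. J j t (\<lambda>i. X!i)) [0..<N] else X!j)"
  using assms by (simp add: received_ow_def)

lemma take_cw_row:
  assumes "i < C" "n \<le> L"
  shows "take n (cw p k L C m ks ! i) = take n (datarow p k L m i)"
  using assms by (simp add: cw_nth)

lemma rdata_indep:
  assumes cj: "causal_jammer q Zr J" and Zr: "Zr \<subseteq> {..<C}" and j: "j < C" and LN: "L \<le> N"
  shows "rdata p L (received_ow C N Zw J (cw p k L C m ks)) j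
       = rdata p L (received_ow C N Zw J (cw p k L C m (\<lambda>_. 0))) j"
proof (cases "j \<in> Zw")
  case True
  have "J j t (\<lambda>i. cw p k L C m ks ! i) = J j t (\<lambda>i. cw p k L C m (\<lambda>_. 0) ! i)" if t: "t < L" for t
  proof -
    have "\<forall>i\<in>Zr. take (Suc t) (cw p k L C m ks ! i) = take (Suc t) (cw p k L C m (\<lambda>_. 0) ! i)"
      using Zr t by (auto simp: take_cw_row)
    thus ?thesis using cj unfolding causal_jammer_def by blast
  qed
  hence "take L (map (\<lambda>t. J j t (\<lambda>i. cw p k L C m ks ! i)) [0..<N])
       = take L (map (\<lambda>t. J j t (\<lambda>i. cw p k L C m (\<lambda>_. 0) ! i)) [0..<N])"
    using LN by (simp add: take_map)
  thus ?thesis using True j by (simp add: rdata_def received_nth)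
next
  case False
  thus ?thesis using j by (simp add: rdata_def received_nth take_cw_row)
qed

lemma length_received_row:
  assumes "j < C" "N = L + Suc C"
  shows "length (received_ow C N Zw J (cw p k L C m ks) ! j) = N"
  using assms by (simp add: received_nth cw_nth)

lemma err_bound:
  assumes p: "prime p" and Cp: "C \<le> p" and kz: "k + zw = C" "zw < k"
    and Zw: "Zw \<subseteq> {..<C}" "card Zw \<le> zw" and Zr: "Zr \<subseteq> {..<C}"
    and cj: "causal_jammer q Zr J" and m: "m < p ^ (k * L)" and N: "N = L + Suc C"
  shows "measure_pmf.prob (keydist p C) {ks. dec p k L C (received_ow C N Zw J (cw p k L C m ks)) \<noteq> m}
         \<le> real (C * C * L) / real p"
proof -
  have pp: "p > 0" using p prime_gt_0_nat by blast
  define D where "D j = rdata p L (received_ow C N Zw J (cw p k L C m (\<lambda>_. 0))) j" for j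
  define B where "B (lj::nat\<times>nat) = {ks::nat\<Rightarrow>nat. D (snd lj) \<noteq> datarow p k L m (snd lj) \<and>
       hsh p (D (snd lj)) (ks (fst lj)) = hsh p (datarow p k L m (snd lj)) (ks (fst lj))}" for lj
  have Dind: "rdata p L (received_ow C N Zw J (cw p k L C m ks)) j = D j" if "j < C" for ks j
    unfolding D_def by (rule rdata_indep[OF cj Zr that]) (use N in simp)
  have sub: "{ks. dec p k L C (received_ow C N Zw J (cw p k L C m ks)) \<noteq> m} \<subseteq> (\<Union>lj\<in>{..<C}\<times>{..<C}. B lj)"
  proof
    fix ks assume ks: "ks \<in> {ks. dec p k L C (received_ow C N Zw J (cw p k L C m ks)) \<noteq> m}"
    show "ks \<in> (\<Union>lj\<in>{..<C}\<times>{..<C}. B lj)"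
    proof (rule ccontr)
      assume nb: "ks \<notin> (\<Union>lj\<in>{..<C}\<times>{..<C}. B lj)"
      have "dec p k L C (received_ow C N Zw J (cw p k L C m ks)) = m"
      proof (rule decode_ok[OF p Cp kz Zw m])
        show "\<forall>l<C. l \<notin> Zw \<longrightarrow> received_ow C N Zw J (cw p k L C m ks) ! l = cw p k L C m ks ! l"
          by (simp add: received_nth)
        show "\<forall>l<C. l \<notin> Zw \<longrightarrow> (\<forall>j<C. rdata p L (received_ow C N Zw J (cw p k L C m ks)) j \<noteq> datarow p k L m j \<longrightarrow>
            hsh p (rdata p L (received_ow C N Zw J (cw p k L C m ks)) j) (ks l) \<noteq> hsh p (datarow p k L m j) (ks l))"
          using nb by (auto simp: Dind B_def)
      qed
      thus False using ks by simp
    qed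
  qed
  have bB: "measure_pmf.prob (keydist p C) (B lj) \<le> real L / real p" if lj: "lj \<in> {..<C}\<times>{..<C}" for lj
  proof (cases "D (snd lj) = datarow p k L m (snd lj)")
    case True
    hence "B lj = {}" by (simp add: B_def)
    thus ?thesis by simp
  next
    case False
    define S where "S = {x. hsh p (D (snd lj)) x = hsh p (datarow p k L m (snd lj)) x}"
    have "B lj = {ks. ks (fst lj) \<in> S}" using False by (simp add: B_def S_def)
    hence "measure_pmf.prob (keydist p C) (B lj) = real (card ({..<p} \<inter> S)) / real p"
      using key_prob[of "fst lj" C p S] lj pp by auto
    also have "card ({..<p} \<inter> S) \<le> L"
    proof -
      have lenD: "length (D (snd lj)) = L"
        using lj length_received_row[OF _ N, of "snd lj" Zw J p k m "\<lambda>_. 0"] N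
        by (auto simp: D_def rdata_def)
      have "{..<p} \<inter> S = {x\<in>{..<p}. hsh p (D (snd lj)) x = hsh p (datarow p k L m (snd lj)) x}"
        by (auto simp: S_def)
      also have "card \<dots> \<le> L"
        by (rule hsh_collision[OF p lenD length_datarow _ _ False])
           (auto simp: D_def rdata_def datarow_def datasym_lt[OF pp] pp)
      finally show ?thesis .
    qed
    hence "real (card ({..<p} \<inter> S)) / real p \<le> real L / real p"
      by (intro divide_right_mono) auto
    finally show ?thesis .
  qed
  have "measure_pmf.prob (keydist p C) {ks. dec p k L C (received_ow C N Zw J (cw p k L C m ks)) \<noteq> m}
      \<le> measure_pmf.prob (keydist p C) (\<Union>lj\<in>{..<C}\<times>{..<C}. B lj)"
    by (rule measure_pmf.finite_measure_mono[OF sub]) simp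
  also have "\<dots> \<le> (\<Sum>lj\<in>{..<C}\<times>{..<C}. measure_pmf.prob (keydist p C) (B lj))"
    by (rule measure_UNION_le) auto
  also have "\<dots> \<le> (\<Sum>lj\<in>{..<C}\<times>{..<C}. real L / real p)"
    by (rule sum_mono) (rule bB)
  also have "\<dots> = real (C * C * L) / real p" by simp
  finally show ?thesis .
qed

lemma code_error:
  assumes p: "prime p" and Cp: "C \<le> p" and kz: "k + zw = C" "zw < k" and zw: "zw = zrw + zwo"
    and N: "N = L + Suc C"
    and adm: "admissible_adv C q zrw zro zwo Zrw Zro Zwo adv"
  shows "error_prob C N (p ^ (k * L)) (encd p k L C) (dec p k L C) (Zrw \<union> Zwo) adv \<le> real (C * C * L) / real p"
proof -
  let ?Zw = "Zrw \<union> Zwo"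
  have Zw: "?Zw \<subseteq> {..<C}" "card ?Zw \<le> zw"
  proof -
    show "?Zw \<subseteq> {..<C}" using adm by (auto simp: admissible_adv_def)
    have "card ?Zw \<le> card Zrw + card Zwo" by (rule card_Un_le)
    thus "card ?Zw \<le> zw" using adm zw by (auto simp: admissible_adv_def)
  qed
  have Zr: "Zrw \<union> Zro \<subseteq> {..<C}" using adm by (auto simp: admissible_adv_def)
  have pp: "p > 0" using p prime_gt_0_nat by blast
  let ?bd = "real (C * C * L) / real p"
  have nn: "?bd \<ge> 0" by simp
  have "pmf (pmf_of_set {..<p ^ (k * L)} \<bind> (\<lambda>m. encd p k L C m \<bind> (\<lambda>X. adv \<bind>
          (\<lambda>J. return_pmf (dec p k L C (received_ow C N ?Zw J X) \<noteq> m))))) True \<le> ?bd"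
  proof (rule bind_le[OF _ nn])
    fix m assume "m \<in> set_pmf (pmf_of_set {..<p ^ (k * L)})"
    moreover have "{..<p ^ (k * L)} \<noteq> {}" using pp by (simp add: lessThan_empty_iff)
    ultimately have m: "m < p ^ (k * L)" by (subst (asm) set_pmf_of_set) auto
    show "pmf (encd p k L C m \<bind> (\<lambda>X. adv \<bind>
          (\<lambda>J. return_pmf (dec p k L C (received_ow C N ?Zw J X) \<noteq> m)))) True \<le> ?bd"
      unfolding bind_commute_pmf[of "encd p k L C m"]
    proof (rule bind_le[OF _ nn])
      fix J assume J: "J \<in> set_pmf adv"
      hence cj: "causal_jammer q (Zrw \<union> Zro) J" using adm by (auto simp: admissible_adv_def)
      have "pmf (encd p k L C m \<bind> (\<lambda>X. return_pmf (dec p k L C (received_ow C N ?Zw J X) \<noteq> m))) True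
          = measure_pmf.prob (keydist p C) {ks. dec p k L C (received_ow C N ?Zw J (cw p k L C m ks)) \<noteq> m}"
        by (simp add: encd_def map_pmf_def[symmetric] pmf_map vimage_def)
      also have "\<dots> \<le> ?bd" by (rule err_bound[OF p Cp kz Zw Zr cj m N])
      finally show "pmf (encd p k L C m \<bind> (\<lambda>X. return_pmf (dec p k L C (received_ow C N ?Zw J X) \<noteq> m))) True \<le> ?bd" .
    qed
  qed
  thus ?thesis by (simp add: error_prob_def measure_pmf_single)
qed

lemma code_wf:
  assumes p: "prime p" and q: "p \<le> q" and N: "N = L + Suc C"
  shows "well_formed_code C q N (p ^ (k * L)) (encd p k L C)"
proof -
  have pp: "p > 0" using p prime_gt_0_nat by blast
  have main: "length x = C \<and> (\<forall>row\<in>set x. length row = N \<and> (\<forall>s\<in>set row. s < q))"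
    if xs: "x \<in> set_pmf (encd p k L C m)" for m x
  proof -
    obtain ks where ks: "ks \<in> set_pmf (keydist p C)" and x: "x = cw p k L C m ks"
      using xs unfolding encd_def by (auto simp: set_map_pmf)
    have ksp: "ks i < p" if "i < C" for i
    proof -
      have "{..<p} \<noteq> {}" using pp by (simp add: lessThan_empty_iff)
      moreover have "ks i \<in> set_pmf (pmf_of_set {..<p})"
        using ks that by (auto simp: keydist_def set_Pi_pmf PiE_dflt_def)
      ultimately show ?thesis by (subst (asm) set_pmf_of_set) auto
    qed
    have "length row = N \<and> (\<forall>s\<in>set row. s < q)" if "row \<in> set x" for row
    proof -
      obtain i where i: "i < C" and row: "row = cw p k L C m ks ! i"
        using x \<open>row \<in> set x\<close> by (metis in_set_conv_nth length_cw)
      have "\<forall>s\<in>set row. s < p" using row i ksp[OF i] pp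
        by (auto simp: cw_nth datarow_def datasym_lt hsh_def)
      hence "\<forall>s\<in>set row. s < q" using q by fastforce
      thus ?thesis using row i N by (simp add: cw_nth)
    qed
    thus ?thesis using x by simp
  qed
  show ?thesis unfolding well_formed_code_def using main pp by auto
qed


lemma achievable_pos:
  assumes z: "2 * zwo + 2 * zrw < C" and R0: "0 \<le> R" and Rk: "R < real (C - (zrw + zwo))"
  shows "ow_achievable C zrw zro zwo R"
  unfolding ow_achievable_def
proof (intro allI impI)
  fix eps :: real assume eps: "eps > 0"
  define zw where "zw = zrw + zwo"
  define k where "k = C - zw"
  have kz: "k + zw = C" "zw < k" using z by (auto simp: k_def zw_def)
  have Rk': "R < real k" using Rk by (simp add: k_def zw_def)
  define R' where "R' = (R + real k) / 2"
  have R'1: "R < R'" "R' < real k" using Rk' by (auto simp: R'_def)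
  define N0 where "N0 = nat \<lceil>real k * real (C + 1) / (real k - R')\<rceil> + C + 1"
  show "\<exists>N0. \<forall>N\<ge>N0. \<exists>b K enc dec. 1 \<le> b \<and> well_formed_code C (2 ^ b) N K enc \<and>
          R * real N * real b \<le> log 2 (real K) \<and>
          (\<forall>Zrw Zro Zwo adv. admissible_adv C (2 ^ b) zrw zro zwo Zrw Zro Zwo adv \<longrightarrow>
             error_prob C N K enc dec (Zrw \<union> Zwo) adv < eps)"
  proof (rule exI[of _ N0], intro allI impI)
    fix N assume NN0: "N0 \<le> N"
    define L where "L = N - Suc C"
    have N: "N = L + Suc C" using NN0 by (simp add: L_def N0_def)
    have kL: "R' * real N \<le> real k * real L"
    proof -
      have "real k * real (C + 1) / (real k - R') \<le> real (N - (C + 1))"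
        using NN0 unfolding N0_def by linarith
      hence "real k * real (C + 1) \<le> real (N - (C + 1)) * (real k - R')"
        using R'1 by (simp add: pos_divide_le_eq)
      moreover have "real L = real N - real (C + 1)" using N by simp
      moreover have "real (N - (C + 1)) \<le> real N" by simp
      moreover have "real k - R' > 0" using R'1 by simp
      ultimately have "real k * real (C + 1) \<le> real N * (real k - R')"
        by (smt (verit, ccfv_threshold) mult_right_mono)
      hence i1: "real k * real (C + 1) \<le> real N * real k - R' * real N" by (simp add: algebra_simps)
      have "real k * real L = real N * real k - real k * real (C + 1)"
        unfolding N by (simp add: algebra_simps)
      thus ?thesis using i1 by linarith
    qed
    define B0 where "B0 = nat \<lceil>R' / (R' - R)\<rceil>"
    define M where "M = max (2 ^ B0) (max C (nat \<lceil>real (C * C * L) / eps\<rceil>))"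
    obtain p where p: "prime p" "M < p" using bigger_prime by blast
    have p1: "p > 1" using p(1) prime_gt_1_nat by blast
    define b where "b = (LEAST b. p \<le> 2 ^ b)"
    have pb: "p \<le> 2 ^ b" unfolding b_def by (rule LeastI[of _ p]) (simp add: less_imp_le)
    have bB0: "B0 < b"
    proof (rule ccontr)
      assume "\<not> B0 < b"
      hence "(2::nat) ^ b \<le> 2 ^ B0" by simp
      thus False using pb p(2) unfolding M_def by linarith
    qed
    have b1: "1 \<le> b" using bB0 by simp
    have pbm: "2 ^ (b - 1) < p"
    proof -
      have "\<not> p \<le> 2 ^ (b - 1)" unfolding b_def by (rule not_less_Least) (use b1 b_def in simp)
      thus ?thesis by simp
    qed
    have logp: "real b - 1 < log 2 (real p)"
    proof -
      have "log 2 (2 ^ (b - 1)) < log 2 (real p)"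
        using pbm by (subst log_less_cancel_iff) (auto simp del: of_nat_power simp: of_nat_power[symmetric])
      thus ?thesis using b1 by (simp add: log_nat_power of_nat_diff)
    qed
    have Cp: "C \<le> p" using p(2) unfolding M_def by simp
    have rate: "R * real N * real b \<le> log 2 (real (p ^ (k * L)))"
    proof -
      have "log 2 (real (p ^ (k * L))) = real k * real L * log 2 (real p)"
        by (simp add: log_nat_power)
      also have "\<dots> \<ge> real k * real L * (real b - 1)"
        using logp by (intro mult_left_mono) auto
      finally have l1: "real k * real L * (real b - 1) \<le> log 2 (real (p ^ (k * L)))" .
      have "R' * real N * (real b - 1) \<le> real k * real L * (real b - 1)"
        using kL b1 by (intro mult_right_mono) auto
      moreover have "R * real b \<le> R' * (real b - 1)"
      proof -
        have "R' / (R' - R) \<le> real B0" unfolding B0_def by linarith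
        hence "R' / (R' - R) \<le> real b - 1" using bB0 by linarith
        hence h: "R' \<le> (real b - 1) * (R' - R)" using R'1 by (simp add: pos_divide_le_eq)
        have "R' * (real b - 1) - R * real b = ((real b - 1) * (R' - R) - R') + (R' - R)"
          by (simp add: algebra_simps)
        thus ?thesis using h R'1 by linarith
      qed
      hence "R * real N * real b \<le> R' * real N * (real b - 1)"
        using mult_left_mono[of "R * real b" "R' * (real b - 1)" "real N"] by (simp add: algebra_simps)
      ultimately show ?thesis using l1 by linarith
    qed
    have errb: "real (C * C * L) / real p < eps"
    proof -
      have "real (C * C * L) / eps \<le> real (nat \<lceil>real (C * C * L) / eps\<rceil>)" by linarith
      also have "\<dots> < real p" using p(2) unfolding M_def by simp
      finally have "real (C * C * L) < eps * real p" using eps by (simp add: divide_less_eq mult.commute)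
      thus ?thesis using p1 by (simp add: divide_less_eq mult.commute)
    qed
    have E: "\<forall>Zrw Zro Zwo adv. admissible_adv C (2 ^ b) zrw zro zwo Zrw Zro Zwo adv \<longrightarrow>
             error_prob C N (p ^ (k * L)) (encd p k L C) (dec p k L C) (Zrw \<union> Zwo) adv < eps"
    proof (intro allI impI)
      fix Zrw Zro Zwo adv assume adm: "admissible_adv C (2 ^ b) zrw zro zwo Zrw Zro Zwo adv"
      have "error_prob C N (p ^ (k * L)) (encd p k L C) (dec p k L C) (Zrw \<union> Zwo) adv
            \<le> real (C * C * L) / real p"
        by (rule code_error[OF p(1) Cp kz zw_def N adm])
      thus "error_prob C N (p ^ (k * L)) (encd p k L C) (dec p k L C) (Zrw \<union> Zwo) adv < eps"
        using errb by linarith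
    qed
    show "\<exists>b K enc dec. 1 \<le> b \<and> well_formed_code C (2 ^ b) N K enc \<and>
          R * real N * real b \<le> log 2 (real K) \<and>
          (\<forall>Zrw Zro Zwo adv. admissible_adv C (2 ^ b) zrw zro zwo Zrw Zro Zwo adv \<longrightarrow>
             error_prob C N K enc dec (Zrw \<union> Zwo) adv < eps)"
      using b1 code_wf[OF p(1) pb N, of k] rate E by blast
  qed
qed


definition Qd :: "nat \<Rightarrow> (nat \<Rightarrow> codeword pmf) \<Rightarrow> (nat \<times> codeword) pmf" where
  "Qd K enc = bind_pmf (pmf_of_set {..<K}) (\<lambda>m. map_pmf (\<lambda>X. (m, X)) (enc m))"

definition Dv :: "'a pmf \<Rightarrow> ('a \<Rightarrow> 'a \<Rightarrow> bool) \<Rightarrow> real" where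
  "Dv Q g = pmf (bind_pmf Q (\<lambda>a. bind_pmf Q (\<lambda>a'. return_pmf (g a a')))) True"

lemma Qbind: "bind_pmf (Qd K enc) F = bind_pmf (pmf_of_set {..<K}) (\<lambda>m. bind_pmf (enc m) (\<lambda>X. F (m, X)))"
  by (simp add: Qd_def bind_assoc_pmf bind_map_pmf o_def)

lemma pmf_bind_return_True: "pmf (bind_pmf M (\<lambda>x. return_pmf (P x))) True = measure_pmf.prob M {x. P x}"
proof -
  have "bind_pmf M (\<lambda>x. return_pmf (P x)) = map_pmf P M" by (simp add: map_pmf_def)
  thus ?thesis by (simp add: pmf_map vimage_def)
qed

lemma Dv_pair: "Dv Q g = measure_pmf.prob (pair_pmf Q Q) {x. g (fst x) (snd x)}"
proof -
  have "bind_pmf Q (\<lambda>a. bind_pmf Q (\<lambda>a'. return_pmf (g a a')))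
      = bind_pmf (pair_pmf Q Q) (\<lambda>x. return_pmf (g (fst x) (snd x)))"
    by (simp add: pair_pmf_def bind_assoc_pmf bind_return_pmf)
  thus ?thesis unfolding Dv_def by (simp add: pmf_bind_return_True)
qed

lemma Dv_sub:
  assumes "\<And>a a'. g3 a a' \<Longrightarrow> g1 a a' \<or> g2 a a'"
  shows "Dv Q g3 \<le> Dv Q g1 + Dv Q g2"
proof -
  let ?M = "pair_pmf Q Q"
  have "measure_pmf.prob ?M {x. g3 (fst x) (snd x)} \<le> measure_pmf.prob ?M ({x. g1 (fst x) (snd x)} \<union> {x. g2 (fst x) (snd x)})"
    by (rule measure_pmf.finite_measure_mono) (use assms in auto)
  also have "\<dots> \<le> measure_pmf.prob ?M {x. g1 (fst x) (snd x)} + measure_pmf.prob ?M {x. g2 (fst x) (snd x)}"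
    by (rule measure_subadditive) (auto simp: measure_pmf.emeasure_finite)
  finally show ?thesis by (simp add: Dv_pair)
qed

lemma map_fst_Qd: "map_pmf fst (Qd K enc) = pmf_of_set {..<K}"
  by (simp add: Qd_def map_bind_pmf pmf.map_comp o_def map_pmf_const bind_return_pmf')

lemma Dv_fst:
  assumes "K \<ge> 1"
  shows "Dv (Qd K enc) (\<lambda>a a'. fst a \<noteq> fst a') = (real K - 1) / real K"
proof -
  let ?U = "pmf_of_set {..<K}"
  have ne: "{..<K} \<noteq> {}" using assms by (simp add: lessThan_empty_iff)
  have e: "bind_pmf (Qd K enc) (\<lambda>a. bind_pmf (Qd K enc) (\<lambda>a'. return_pmf (fst a \<noteq> fst a')))
      = bind_pmf ?U (\<lambda>m. bind_pmf ?U (\<lambda>m'. return_pmf (m \<noteq> m')))"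
  proof -
    have h: "\<And>F. bind_pmf (Qd K enc) (\<lambda>a. F (fst a)) = bind_pmf ?U F"
      using bind_map_pmf[of fst "Qd K enc"] map_fst_Qd by metis
    have "bind_pmf (Qd K enc) (\<lambda>a. bind_pmf (Qd K enc) (\<lambda>a'. return_pmf (fst a \<noteq> fst a')))
        = bind_pmf (Qd K enc) (\<lambda>a. bind_pmf ?U (\<lambda>m'. return_pmf (fst a \<noteq> m')))"
      by (intro bind_pmf_cong refl h)
    also have "\<dots> = bind_pmf ?U (\<lambda>m. bind_pmf ?U (\<lambda>m'. return_pmf (m \<noteq> m')))"
      by (rule h[of "\<lambda>m. bind_pmf ?U (\<lambda>m'. return_pmf (m \<noteq> m'))"])
    finally show ?thesis .
  qed
  have inner: "pmf (bind_pmf ?U (\<lambda>m'. return_pmf (m \<noteq> m'))) True = (real K - 1) / real K" if m: "m < K" for m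
  proof -
    have "pmf (bind_pmf ?U (\<lambda>m'. return_pmf (m \<noteq> m'))) True = measure_pmf.prob ?U {m'. m \<noteq> m'}"
      by (rule pmf_bind_return_True)
    also have "\<dots> = real (card ({..<K} \<inter> {m'. m \<noteq> m'})) / real K"
      using ne by (simp add: measure_pmf_of_set)
    also have "{..<K} \<inter> {m'. m \<noteq> m'} = {..<K} - {m}" by auto
    also have "real (card ({..<K} - {m})) = real K - 1" using m by (simp add: of_nat_diff)
    finally show ?thesis .
  qed
  have "Dv (Qd K enc) (\<lambda>a a'. fst a \<noteq> fst a') = pmf (bind_pmf ?U (\<lambda>m. bind_pmf ?U (\<lambda>m'. return_pmf (m \<noteq> m')))) True"
    unfolding Dv_def e ..
  also have "\<dots> = (\<Sum>m<K. pmf (bind_pmf ?U (\<lambda>m'. return_pmf (m \<noteq> m'))) True) / real K"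
    using ne by (subst pmf_bind_pmf_of_set) auto
  also have "\<dots> = (\<Sum>m<K. (real K - 1) / real K) / real K"
    by (simp add: inner)
  also have "\<dots> = (real K - 1) / real K" using assms by simp
  finally show ?thesis .
qed

definition jamof :: "codeword \<Rightarrow> jammer" where
  "jamof X' = (\<lambda>i t _. if i < length X' \<and> t < length (X'!i) then X'!i!t else 0)"

definition mix :: "nat \<Rightarrow> nat set \<Rightarrow> codeword \<Rightarrow> codeword \<Rightarrow> codeword" where
  "mix C W X X' = map (\<lambda>i. if i \<in> W then X'!i else X!i) [0..<C]"

lemma set_Qd:
  assumes "a \<in> set_pmf (Qd K enc)" "K \<ge> 1"
  shows "fst a < K \<and> snd a \<in> set_pmf (enc (fst a))"
proof -
  have ne: "{..<K} \<noteq> {}" using assms(2) by (simp add: lessThan_empty_iff)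
  show ?thesis using assms(1) ne by (auto simp: Qd_def set_pmf_of_set)
qed

lemma Dv_commute: "Dv Q g = Dv Q (\<lambda>a a'. g a' a)"
  unfolding Dv_def by (subst bind_commute_pmf) simp

lemma err_as_Dv:
  assumes wf: "well_formed_code C q N K enc"
  shows "error_prob C N K enc dc W (map_pmf (\<lambda>a. jamof (snd a)) (Qd K enc))
       = Dv (Qd K enc) (\<lambda>a a'. dc (mix C W (snd a) (snd a')) \<noteq> fst a)"
proof -
  have K1: "K \<ge> 1" using wf by (simp add: well_formed_code_def)
  let ?Q = "Qd K enc"
  have rec: "received_ow C N W (jamof (snd a')) X = mix C W X (snd a')" if a': "a' \<in> set_pmf ?Q" for a' X
  proof -
    have X': "snd a' \<in> set_pmf (enc (fst a'))" "fst a' < K" using set_Qd[OF a' K1] by auto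
    hence len: "length (snd a') = C" and rows: "\<And>row. row \<in> set (snd a') \<Longrightarrow> length row = N"
      using wf unfolding well_formed_code_def by blast+
    have "map (\<lambda>t. jamof (snd a') i t (\<lambda>j. X ! j)) [0..<N] = snd a' ! i" if i: "i < C" for i
    proof -
      have li: "length (snd a' ! i) = N" using rows[of "snd a' ! i"] i len by simp
      have "map (\<lambda>t. jamof (snd a') i t (\<lambda>j. X ! j)) [0..<N] = map (\<lambda>t. snd a' ! i ! t) [0..<length (snd a' ! i)]"
        using li i len by (auto simp: jamof_def)
      also have "\<dots> = snd a' ! i" by (rule map_nth)
      finally show ?thesis .
    qed
    thus ?thesis unfolding received_ow_def mix_def by (intro map_cong refl) auto
  qed
  have "error_prob C N K enc dc W (map_pmf (\<lambda>a. jamof (snd a)) ?Q)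
      = pmf (bind_pmf ?Q (\<lambda>a. bind_pmf ?Q (\<lambda>a'. return_pmf (dc (received_ow C N W (jamof (snd a')) (snd a)) \<noteq> fst a)))) True"
    unfolding error_prob_def measure_pmf_single by (simp add: Qbind bind_map_pmf)
  also have "\<dots> = pmf (bind_pmf ?Q (\<lambda>a. bind_pmf ?Q (\<lambda>a'. return_pmf (dc (mix C W (snd a) (snd a')) \<noteq> fst a)))) True"
    by (intro arg_cong2[where f=pmf] refl bind_pmf_cong) (auto simp: rec)
  finally show ?thesis unfolding Dv_def .
qed

lemma mix_swap:
  assumes "W2 = {..<C} - W1"
  shows "mix C W2 X X' = mix C W1 X' X"
  unfolding mix_def using assms by (intro map_cong refl) auto

lemma sym_bound:
  assumes wf: "well_formed_code C q N K enc" and W2: "W2 = {..<C} - W1"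
  shows "error_prob C N K enc dc W1 (map_pmf (\<lambda>a. jamof (snd a)) (Qd K enc))
       + error_prob C N K enc dc W2 (map_pmf (\<lambda>a. jamof (snd a)) (Qd K enc)) \<ge> (real K - 1) / real K"
proof -
  have K1: "K \<ge> 1" using wf by (simp add: well_formed_code_def)
  let ?Q = "Qd K enc"
  have "error_prob C N K enc dc W2 (map_pmf (\<lambda>a. jamof (snd a)) ?Q)
      = Dv ?Q (\<lambda>a a'. dc (mix C W1 (snd a') (snd a)) \<noteq> fst a)"
    unfolding err_as_Dv[OF wf] mix_swap[OF W2] ..
  also have "\<dots> = Dv ?Q (\<lambda>a a'. dc (mix C W1 (snd a) (snd a')) \<noteq> fst a')"
    by (subst Dv_commute) simp
  finally have e2: "error_prob C N K enc dc W2 (map_pmf (\<lambda>a. jamof (snd a)) ?Q)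
      = Dv ?Q (\<lambda>a a'. dc (mix C W1 (snd a) (snd a')) \<noteq> fst a')" .
  have "(real K - 1) / real K = Dv ?Q (\<lambda>a a'. fst a \<noteq> fst a')" using Dv_fst[OF K1] by simp
  also have "\<dots> \<le> Dv ?Q (\<lambda>a a'. dc (mix C W1 (snd a) (snd a')) \<noteq> fst a)
                 + Dv ?Q (\<lambda>a a'. dc (mix C W1 (snd a) (snd a')) \<noteq> fst a')"
    by (rule Dv_sub) auto
  finally show ?thesis using e2 err_as_Dv[OF wf, of dc W1] by linarith
qed

lemma adm_jam:
  assumes wf: "well_formed_code C q N K enc" and q: "q > 0"
    and Z: "Zrw \<subseteq> {..<C}" "Zwo \<subseteq> {..<C}" "Zrw \<inter> Zwo = {}" "card Zrw \<le> zrw" "card Zwo \<le> zwo"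
  shows "admissible_adv C q zrw zro zwo Zrw {} Zwo (map_pmf (\<lambda>a. jamof (snd a)) (Qd K enc))"
proof -
  have K1: "K \<ge> 1" using wf by (simp add: well_formed_code_def)
  have "causal_jammer q Zrw J" if J: "J \<in> set_pmf (map_pmf (\<lambda>a. jamof (snd a)) (Qd K enc))" for J
  proof -
    obtain a where a: "a \<in> set_pmf (Qd K enc)" and Ja: "J = jamof (snd a)" using J by auto
    have X': "snd a \<in> set_pmf (enc (fst a))" "fst a < K" using set_Qd[OF a K1] by auto
    have rows: "\<forall>row\<in>set (snd a). \<forall>s\<in>set row. s < q"
      using wf X' unfolding well_formed_code_def by blast
    have "J i t X < q" for i t X
    proof (cases "i < length (snd a) \<and> t < length (snd a ! i)")
      case True
      hence "snd a ! i ! t < q" using rows nth_mem[of i "snd a"] nth_mem[of t "snd a ! i"] by blast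
      thus ?thesis using True by (simp add: Ja jamof_def)
    next
      case False thus ?thesis using q by (auto simp: Ja jamof_def)
    qed
    thus ?thesis unfolding causal_jammer_def by (auto simp: Ja jamof_def)
  qed
  thus ?thesis using Z by (auto simp: admissible_adv_def)
qed

lemma conv_zero:
  assumes zC: "zrw + zro + zwo \<le> C" and nz: "\<not> (2 * zwo + 2 * zrw < C)" and ach: "ow_achievable C zrw zro zwo R"
  shows "R \<le> 0"
proof (rule ccontr)
  assume "\<not> R \<le> 0"
  hence R0: "R > 0" by simp
  obtain N0 where N0: "\<forall>N\<ge>N0. \<exists>b K enc dc. 1 \<le> b \<and> well_formed_code C (2 ^ b) N K enc \<and>
          R * real N * real b \<le> log 2 (real K) \<and>
          (\<forall>Zrw Zro Zwo adv. admissible_adv C (2 ^ b) zrw zro zwo Zrw Zro Zwo adv \<longrightarrow>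
             error_prob C N K enc dc (Zrw \<union> Zwo) adv < 1/4)"
    using ach unfolding ow_achievable_def by (meson divide_pos_pos zero_less_numeral zero_less_one)
  define N where "N = max N0 1"
  obtain b K enc dc where b1: "1 \<le> b" and wf: "well_formed_code C (2 ^ b) N K enc"
    and rate: "R * real N * real b \<le> log 2 (real K)"
    and E: "\<forall>Zrw Zro Zwo adv. admissible_adv C (2 ^ b) zrw zro zwo Zrw Zro Zwo adv \<longrightarrow>
             error_prob C N K enc dc (Zrw \<union> Zwo) adv < 1/4"
    using N0 unfolding N_def by (meson max.cobounded1)
  have K1: "K \<ge> 1" using wf by (simp add: well_formed_code_def)
  have K2: "K \<ge> 2"
  proof (rule ccontr)
    assume "\<not> K \<ge> 2"
    hence "K = 1" using K1 by simp
    hence "log 2 (real K) = 0" by simp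
    moreover have "R * real N * real b > 0" using R0 b1 by (simp add: N_def)
    ultimately show False using rate by simp
  qed
  define zw where "zw = zrw + zwo"
  define m2 where "m2 = min C (zw + zrw)"
  let ?adv = "map_pmf (\<lambda>a. jamof (snd a)) (Qd K enc)"
  have q0: "(2::nat) ^ b > 0" by simp
  have a1: "admissible_adv C (2 ^ b) zrw zro zwo {..<zrw} {} {zrw..<zw} ?adv"
    by (rule adm_jam[OF wf q0]) (use zC in \<open>auto simp: zw_def\<close>)
  have a2: "admissible_adv C (2 ^ b) zrw zro zwo {zw..<m2} {} {m2..<C} ?adv"
    by (rule adm_jam[OF wf q0]) (use zC nz in \<open>auto simp: zw_def m2_def\<close>)
  have e1: "error_prob C N K enc dc {..<zw} ?adv < 1/4"
  proof -
    have "{..<zrw} \<union> {zrw..<zw} = {..<zw}" by (auto simp: zw_def)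
    thus ?thesis using E a1 by metis
  qed
  have e2: "error_prob C N K enc dc {zw..<C} ?adv < 1/4"
  proof -
    have "{zw..<m2} \<union> {m2..<C} = {zw..<C}" using zC by (auto simp: zw_def m2_def)
    thus ?thesis using E a2 by metis
  qed
  have "{zw..<C} = {..<C} - {..<zw}" by auto
  from sym_bound[OF wf this] have "(real K - 1) / real K \<le> error_prob C N K enc dc {..<zw} ?adv + error_prob C N K enc dc {zw..<C} ?adv" .
  moreover have "(real K - 1) / real K \<ge> 1/2" using K2 by (simp add: field_simps)
  ultimately show False using e1 e2 by linarith
qed


lemma count_received:
  fixes q N C zw :: nat
  assumes kC: "zw \<le> C"
  defines "WF \<equiv> {X::codeword. length X = C \<and> (\<forall>row\<in>set X. length row = N \<and> (\<forall>s\<in>set row. s < q))}"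
  defines "g \<equiv> received_ow C N {..<zw} (\<lambda>i t X. 0)"
  shows "finite (g ` WF) \<and> card (g ` WF) \<le> (q ^ N) ^ (C - zw)"
proof -
  define Rw where "Rw = {r::nat list. set r \<subseteq> {..<q} \<and> length r = N}"
  define T where "T = {ys. set ys \<subseteq> Rw \<and> length ys = C - zw}"
  define h where "h ys = map (\<lambda>i. if i \<in> {..<zw} then map (\<lambda>t. 0::nat) [0..<N] else ys ! (i - zw)) [0..<C]" for ys
  have finRw: "finite Rw" unfolding Rw_def by (rule finite_lists_length_eq) simp
  have cRw: "card Rw = q ^ N" unfolding Rw_def by (subst card_lists_length_eq) auto
  have finT: "finite T" unfolding T_def by (rule finite_lists_length_eq[OF finRw])
  have cT: "card T = (q ^ N) ^ (C - zw)" unfolding T_def by (subst card_lists_length_eq[OF finRw]) (simp add: cRw)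
  have sub: "g ` WF \<subseteq> h ` T"
  proof
    fix Y assume "Y \<in> g ` WF"
    then obtain X where X: "X \<in> WF" and Y: "Y = g X" by auto
    have "drop zw X \<in> T"
      using X kC by (auto simp: T_def Rw_def WF_def dest: in_set_dropD)
    moreover have "g X = h (drop zw X)"
      unfolding g_def h_def received_ow_def using X kC by (intro map_cong refl) (auto simp: WF_def)
    ultimately show "Y \<in> h ` T" using Y by auto
  qed
  have fin: "finite (g ` WF)" using finite_subset[OF sub] finT by blast
  have "card (g ` WF) \<le> card (h ` T)" by (rule card_mono[OF _ sub]) (use finT in simp)
  also have "\<dots> \<le> card T" by (rule card_image_le[OF finT])
  finally show ?thesis using fin cT by simp
qed

lemma conv_upper:
  assumes zC: "zrw + zro + zwo \<le> C" and ach: "ow_achievable C zrw zro zwo R"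
  shows "R \<le> real (C - (zrw + zwo))"
proof (rule ccontr)
  define zw where "zw = zrw + zwo"
  define k where "k = C - zw"
  assume "\<not> R \<le> real (C - (zrw + zwo))"
  hence Rk: "R > real k" by (simp add: k_def zw_def)
  obtain N0 where N0: "\<forall>N\<ge>N0. \<exists>b K enc dc. 1 \<le> b \<and> well_formed_code C (2 ^ b) N K enc \<and>
          R * real N * real b \<le> log 2 (real K) \<and>
          (\<forall>Zrw Zro Zwo adv. admissible_adv C (2 ^ b) zrw zro zwo Zrw Zro Zwo adv \<longrightarrow>
             error_prob C N K enc dc (Zrw \<union> Zwo) adv < 1/2)"
    using ach unfolding ow_achievable_def by (meson divide_pos_pos zero_less_numeral zero_less_one)
  define N where "N = max N0 (nat \<lceil>1 / (R - real k)\<rceil> + 1)"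
  obtain b K enc dc where b1: "1 \<le> b" and wf: "well_formed_code C (2 ^ b) N K enc"
    and rate: "R * real N * real b \<le> log 2 (real K)"
    and E: "\<forall>Zrw Zro Zwo adv. admissible_adv C (2 ^ b) zrw zro zwo Zrw Zro Zwo adv \<longrightarrow>
             error_prob C N K enc dc (Zrw \<union> Zwo) adv < 1/2"
    using N0 unfolding N_def by (meson max.cobounded1)
  have K1: "K \<ge> 1" using wf by (simp add: well_formed_code_def)
  have neK: "{..<K} \<noteq> {}" using K1 by (simp add: lessThan_empty_iff)
  define J0 :: jammer where "J0 = (\<lambda>i t X. 0)"
  define g where "g = received_ow C N {..<zw} J0"
  have adm: "admissible_adv C (2 ^ b) zrw zro zwo {..<zrw} {} {zrw..<zw} (return_pmf J0)"
    using zC by (auto simp: admissible_adv_def causal_jammer_def J0_def zw_def)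
  have "{..<zrw} \<union> {zrw..<zw} = {..<zw}" by (auto simp: zw_def)
  hence err: "error_prob C N K enc dc {..<zw} (return_pmf J0) < 1/2" using E adm by metis
  define c where "c m = measure_pmf.prob (enc m) {X. dc (g X) = m}" for m
  have c01: "0 \<le> c m" "c m \<le> 1" for m by (auto simp: c_def)
  have ep: "error_prob C N K enc dc {..<zw} (return_pmf J0) = 1 - (\<Sum>m<K. c m) / real K"
  proof -
    have inner: "pmf (bind_pmf (enc m) (\<lambda>X. return_pmf (dc (g X) \<noteq> m))) True = 1 - c m" for m
    proof -
      have "pmf (bind_pmf (enc m) (\<lambda>X. return_pmf (dc (g X) \<noteq> m))) True = measure_pmf.prob (enc m) {X. dc (g X) \<noteq> m}"
        by (rule pmf_bind_return_True)
      also have "{X. dc (g X) \<noteq> m} = space (measure_pmf (enc m)) - {X. dc (g X) = m}" by auto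
      also have "measure_pmf.prob (enc m) \<dots> = 1 - c m"
        unfolding c_def by (rule measure_pmf.prob_compl) simp
      finally show ?thesis .
    qed
    have "error_prob C N K enc dc {..<zw} (return_pmf J0)
        = pmf (bind_pmf (pmf_of_set {..<K}) (\<lambda>m. bind_pmf (enc m) (\<lambda>X. return_pmf (dc (g X) \<noteq> m)))) True"
      unfolding error_prob_def measure_pmf_single g_def by (simp add: bind_return_pmf)
    also have "\<dots> = (\<Sum>m<K. 1 - c m) / real K"
      using neK by (subst pmf_bind_pmf_of_set) (auto simp: inner)
    also have "\<dots> = 1 - (\<Sum>m<K. c m) / real K"
      using K1 by (simp add: sum_subtractf diff_divide_distrib)
    finally show ?thesis .
  qed
  define WF where "WF = {X::codeword. length X = C \<and> (\<forall>row\<in>set X. length row = N \<and> (\<forall>s\<in>set row. s < 2 ^ b))}"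
  have cr: "finite (g ` WF) \<and> card (g ` WF) \<le> ((2 ^ b) ^ N) ^ (C - zw)"
    unfolding g_def WF_def J0_def by (rule count_received) (use zC in \<open>simp add: zw_def\<close>)
  define Sp where "Sp = {m\<in>{..<K}. c m \<noteq> 0}"
  have SpD: "Sp \<subseteq> dc ` g ` WF"
  proof
    fix m assume m: "m \<in> Sp"
    hence "set_pmf (enc m) \<inter> {X. dc (g X) = m} \<noteq> {}"
      by (auto simp: Sp_def c_def measure_pmf_zero_iff)
    then obtain X where X: "X \<in> set_pmf (enc m)" "dc (g X) = m" by auto
    have "X \<in> WF" using wf X(1) m unfolding well_formed_code_def WF_def Sp_def by auto
    thus "m \<in> dc ` g ` WF" using X(2) by force
  qed
  have cSp: "card Sp \<le> ((2 ^ b) ^ N) ^ (C - zw)"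
  proof -
    have "card Sp \<le> card (dc ` g ` WF)" by (rule card_mono[OF _ SpD]) (use cr in simp)
    also have "\<dots> \<le> card (g ` WF)" by (rule card_image_le) (use cr in simp)
    finally show ?thesis using cr by linarith
  qed
  have sumc: "(\<Sum>m<K. c m) \<le> real (card Sp)"
  proof -
    have "(\<Sum>m<K. c m) = (\<Sum>m\<in>Sp. c m)"
      by (rule sum.mono_neutral_right) (auto simp: Sp_def)
    also have "\<dots> \<le> (\<Sum>m\<in>Sp. 1)" by (rule sum_mono) (rule c01)
    finally show ?thesis by simp
  qed
  have "real K < 2 * real (card Sp)"
  proof -
    have "(\<Sum>m<K. c m) / real K > 1/2" using err ep by linarith
    hence "(\<Sum>m<K. c m) > real K / 2" using K1 by (simp add: field_simps)
    thus ?thesis using sumc by linarith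
  qed
  also have "\<dots> \<le> 2 * 2 ^ (b * N * k)"
  proof -
    have "real (card Sp) \<le> real (((2 ^ b) ^ N) ^ (C - zw))" using cSp by linarith
    also have "\<dots> = 2 ^ (b * N * k)" by (simp add: k_def power_mult)
    finally show ?thesis by simp
  qed
  finally have "log 2 (real K) < log 2 (2 * 2 ^ (b * N * k))"
    using K1 by (subst log_less_cancel_iff) auto
  also have "\<dots> = 1 + real b * real N * real k"
    by (simp add: log_mult log_nat_power)
  finally have l: "R * real N * real b < 1 + real b * real N * real k" using rate by linarith
  have "real N \<ge> real (nat \<lceil>1 / (R - real k)\<rceil> + 1)" unfolding N_def by simp
  hence "real N > 1 / (R - real k)" by linarith
  hence N1: "(R - real k) * real N > 1" using Rk by (simp add: divide_less_eq mult.commute)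
  have "(R - real k) * real N \<le> (R - real k) * real N * real b"
    using N1 b1 by (simp add: mult_le_cancel_left1)
  moreover have "(R - real k) * real N * real b = R * real N * real b - real b * real N * real k"
    by (simp add: algebra_simps)
  ultimately show False using l N1 by linarith
qed


lemma achievable_zero: "ow_achievable C zrw zro zwo 0"
proof -
  have main: "\<exists>b K enc dec. 1 \<le> b \<and> well_formed_code C (2 ^ b) N K enc \<and>
          0 * real N * real b \<le> log 2 (real K) \<and>
          (\<forall>Zrw Zro Zwo adv. admissible_adv C (2 ^ b) zrw zro zwo Zrw Zro Zwo adv \<longrightarrow>
             error_prob C N K enc dec (Zrw \<union> Zwo) adv < eps)" if eps: "eps > 0" for eps :: real and N :: nat
  proof -
    let ?enc = "\<lambda>m::nat. return_pmf (replicate C (replicate N (0::nat)))"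
    have wf: "well_formed_code C (2 ^ 1) N 1 ?enc" by (auto simp: well_formed_code_def)
    have "error_prob C N 1 ?enc (\<lambda>_. 0) Zw adv = 0" for Zw adv
    proof -
      have "pmf_of_set {..<(1::nat)} = return_pmf 0"
        by (simp add: lessThan_Suc pmf_of_set_singleton)
      thus ?thesis by (simp add: error_prob_def bind_return_pmf)
    qed
    thus ?thesis
      using wf eps by (intro exI[of _ 1] exI[of _ "1::nat"] exI[of _ ?enc] exI[of _ "\<lambda>_. 0::nat"]) auto
  qed
  show ?thesis unfolding ow_achievable_def using main by blast
qed

theorem theorem2:
  fixes C zrw zro zwo :: nat
  assumes "zrw + zro + zwo \<le> C"
  shows "ow_capacity C zrw zro zwo =
           (if 2 * zwo + 2 * zrw < C then real (C - (zrw + zwo)) else 0)"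
proof -
  define S where "S = {R. R \<ge> 0 \<and> ow_achievable C zrw zro zwo R}"
  have capS: "ow_capacity C zrw zro zwo = Sup S" by (simp add: ow_capacity_def S_def)
  have S0: "0 \<in> S" by (simp add: S_def achievable_zero)
  have up: "\<forall>x\<in>S. x \<le> real (C - (zrw + zwo))" using conv_upper[OF assms] by (auto simp: S_def)
  have bdd: "bdd_above S" using up by (auto simp: bdd_above_def)
  show ?thesis
  proof (cases "2 * zwo + 2 * zrw < C")
    case True
    let ?k = "real (C - (zrw + zwo))"
    have le: "Sup S \<le> ?k" using S0 up by (intro cSup_least) auto
    have ge: "?k \<le> Sup S"
    proof (rule ccontr)
      assume "\<not> ?k \<le> Sup S"
      hence lt: "Sup S < ?k" by simp
      have s0: "0 \<le> Sup S" using cSup_upper[OF S0 bdd] .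
      define R where "R = (Sup S + ?k) / 2"
      have "R \<in> S" unfolding S_def using achievable_pos[OF True, of R zro] s0 lt by (auto simp: R_def)
      hence "R \<le> Sup S" using cSup_upper bdd by blast
      thus False using lt by (simp add: R_def)
    qed
    show ?thesis using le ge True capS by simp
  next
    case False
    have "S = {0}" using S0 conv_zero[OF assms False] by (fastforce simp: S_def)
    thus ?thesis using False capS by simp
  qed
qed

end
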